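(* Let $M$ and $M'$ be sets of equatorial measurement angles in $[0,\pi)$ with $|M|,|M'|\ge2$, and let $U$ be a single-qubit unitary such that $UMU^\dagger=M'$ modulo $\pi$, i.e. for every $\varphi\in M$ there is $\varphi'$ with $UE_\varphi U^\dagger=\pm E_{\varphi'}$, and $\{\varphi'\bmod\pi:\varphi\in M\}=M'$. Then, up to a global phase, $U=X^aP_\theta$ for some $\theta\in[0,2\pi)$ and $a\in\{0,1\}$, where $P_\theta=\mathrm{diag}(1,e^{i\theta})$ is the phase gate.
   Context: For $\varphi\in\mathbb{R}$, the equatorial measurement with angle $\varphi$ is the observable $E_\varphi=\cos\varphi\,X+\sin\varphi\,Y$, where $X,Y$ are Pauli matrices; note $E_{\varphi+\pi}=-E_\varphi$. *)

theory Defs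
  imports "HOL-Analysis.Analysis"
begin

type_synonym qmat = "complex ^ 2 ^ 2"

definition mat2 :: "complex \<Rightarrow> complex \<Rightarrow> complex \<Rightarrow> complex \<Rightarrow> qmat" where
  "mat2 a b c d = (\<chi> i j. if i = 0 then (if j = 0 then a else b) else (if j = 0 then c else d))"

definition pauliX :: qmat where "pauliX = mat2 0 1 1 0"
definition pauliY :: qmat where "pauliY = mat2 0 (- \<i>) \<i> 0"

definition adj :: "qmat \<Rightarrow> qmat" where
  "adj U = (\<chi> i j. cnj (U $ j $ i))"

definition unitary :: "qmat \<Rightarrow> bool" where
  "unitary U \<longleftrightarrow> adj U ** U = mat 1 \<and> U ** adj U = mat 1"

definition cscale :: "complex \<Rightarrow> qmat \<Rightarrow> qmat" where
  "cscale c A = (\<chi> i j. c * A $ i $ j)"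

definition Eq :: "real \<Rightarrow> qmat" where
  "Eq \<phi> = (\<chi> i j. complex_of_real (cos \<phi>) * pauliX $ i $ j + complex_of_real (sin \<phi>) * pauliY $ i $ j)"

definition phase_gate :: "real \<Rightarrow> qmat" where
  "phase_gate \<theta> = mat2 1 0 0 (exp (\<i> * complex_of_real \<theta>))"

definition mod_pi :: "real \<Rightarrow> real" where
  "mod_pi x = x - pi * of_int \<lfloor>x / pi\<rfloor>"

end

theory Submission
  imports Defs "HOL-Analysis.Analysis"
begin

lemma two2: "(2::2) = 0" by simp
lemma one_ne0: "(1::2) \<noteq> 0" by simp
lemma UNIV2': "(UNIV::2 set) = {0,1}" using UNIV_2 two2 by (simp add: insert_commute)
lemma sum2': "sum f (UNIV::2 set) = f 0 + f 1" by (simp add: UNIV2')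
lemma all2: "(\<forall>i::2. P i) \<longleftrightarrow> P 0 \<and> P 1" by (metis UNIV2' UNIV_I insertE singletonD)

lemma mat2_eta: "U = mat2 (U$0$0) (U$0$1) (U$1$0) (U$1$1)"
  unfolding mat2_def by (simp add: vec_eq_iff all2)

lemma mat2_eq: "mat2 a b c d = mat2 a' b' c' d' \<longleftrightarrow> a=a' \<and> b=b' \<and> c=c' \<and> d=d'"
  unfolding mat2_def by (auto simp add: vec_eq_iff all2)

lemma mat2_mult: "mat2 a b c d ** mat2 e f g h = mat2 (a*e+b*g) (a*f+b*h) (c*e+d*g) (c*f+d*h)"
  unfolding mat2_def matrix_matrix_mult_def by (simp add: vec_eq_iff all2 sum2')

lemma mat2_adj: "adj (mat2 a b c d) = mat2 (cnj a) (cnj c) (cnj b) (cnj d)"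
  unfolding mat2_def adj_def by (simp add: vec_eq_iff all2)

lemma mat2_uminus: "- mat2 a b c d = mat2 (-a) (-b) (-c) (-d)"
  unfolding mat2_def by (simp add: vec_eq_iff all2)

lemma mat2_one: "mat 1 = mat2 1 0 0 1"
  unfolding mat2_def mat_def by (simp add: vec_eq_iff all2)

lemma mat2_scale: "cscale k (mat2 a b c d) = mat2 (k*a) (k*b) (k*c) (k*d)"
  unfolding mat2_def cscale_def by (simp add: vec_eq_iff all2)

lemma Eq_mat2: "Eq x = mat2 0 (complex_of_real (cos x) - \<i> * complex_of_real (sin x)) (complex_of_real (cos x) + \<i> * complex_of_real (sin x)) 0"
  unfolding Eq_def pauliX_def pauliY_def mat2_def by (simp add: vec_eq_iff all2)

lemma key:
  fixes z :: complex and a b :: real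
  assumes "a \<in> {0..<pi}" "b \<in> {0..<pi}" "a \<noteq> b"
    and "Re (z * (cos a + \<i> * sin a)) = 0" "Re (z * (cos b + \<i> * sin b)) = 0"
  shows "z = 0"
proof -
  have "sin (a - b) \<noteq> 0" using assms(1-3) sin_eq_0_pi[of "a-b"] by auto
  hence d: "sin a * cos b - cos a * sin b \<noteq> 0" by (simp add: sin_diff)
  have e1: "Re z * cos a - Im z * sin a = 0" "Re z * cos b - Im z * sin b = 0" using assms(4,5) by simp_all
  have "Re z * (sin a * cos b - cos a * sin b) = sin a * (Re z * cos b - Im z * sin b) - sin b * (Re z * cos a - Im z * sin a)"
    by (simp add: algebra_simps)
  hence "Re z * (sin a * cos b - cos a * sin b) = 0" using e1 by simp
  hence "Re z = 0" using d by simp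
  moreover have "Im z * (sin a * cos b - cos a * sin b) = cos a * (Re z * cos b - Im z * sin b) - cos b * (Re z * cos a - Im z * sin a)"
    by (simp add: algebra_simps)
  hence "Im z * (sin a * cos b - cos a * sin b) = 0" using e1 by simp
  hence "Im z = 0" using d by simp
  ultimately show ?thesis by (simp add: complex_eq_iff)
qed

lemma angle_exists:
  fixes z :: complex assumes "cmod z = 1"
  shows "\<exists>t. 0 \<le> t \<and> t < 2*pi \<and> exp (\<i> * complex_of_real t) = z"
proof -
  have "is_Arg z (Arg2pi z)" "0 \<le> Arg2pi z" "Arg2pi z < 2*pi" using Arg2pi by auto
  thus ?thesis using assms unfolding is_Arg_def by (metis mult_1 of_real_1)
qed

lemma entry00:
  "(mat2 p q r s ** Eq x ** adj (mat2 p q r s)) $ 0 $ 0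
     = q * (complex_of_real (cos x) + \<i> * complex_of_real (sin x)) * cnj p + p * (complex_of_real (cos x) - \<i> * complex_of_real (sin x)) * cnj q"
  unfolding Eq_mat2 mat2_adj mat2_mult by (simp add: mat2_def)

lemma Eq00: "Eq x $ 0 $ 0 = 0"
  unfolding Eq_mat2 by (simp add: mat2_def)

lemma re0:
  assumes "q * (complex_of_real (cos x) + \<i> * complex_of_real (sin x)) * cnj p + p * (complex_of_real (cos x) - \<i> * complex_of_real (sin x)) * cnj q = 0"
  shows "Re (cnj p * q * (complex_of_real (cos x) + \<i> * complex_of_real (sin x))) = 0"
proof -
  define w where "w = complex_of_real (cos x) + \<i> * complex_of_real (sin x)"
  have cw: "cnj w = complex_of_real (cos x) - \<i> * complex_of_real (sin x)"
    unfolding w_def by simp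
  define z where "z = cnj p * q * w"
  have "z + cnj z = 0" using assms unfolding z_def cw[symmetric] w_def[symmetric]
    by (simp add: mult.commute mult.left_commute)
  hence "Re (z + cnj z) = 0" by simp
  hence "Re z = 0" by simp
  thus ?thesis unfolding z_def w_def .
qed

theorem lemma30:
  fixes M M' :: "real set" and U :: qmat
  assumes "M \<subseteq> {0..<pi}" and "M' \<subseteq> {0..<pi}"
    and "\<exists>a b. a \<in> M \<and> b \<in> M \<and> a \<noteq> b"
    and "\<exists>a b. a \<in> M' \<and> b \<in> M' \<and> a \<noteq> b"
    and "unitary U"
    and "\<exists>f :: real \<Rightarrow> real.
           (\<forall>\<phi>\<in>M. U ** Eq \<phi> ** adj U = Eq (f \<phi>) \<or> U ** Eq \<phi> ** adj U = - Eq (f \<phi>))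
           \<and> (\<lambda>\<phi>. mod_pi (f \<phi>)) ` M = M'"
  shows "\<exists>(c :: complex) (\<theta> :: real) (a :: nat).
           cmod c = 1 \<and> 0 \<le> \<theta> \<and> \<theta> < 2 * pi \<and> a \<in> {0, 1} \<and>
           U = cscale c ((if a = 0 then mat 1 else pauliX) ** phase_gate \<theta>)"
proof -
  obtain f where hf: "\<forall>\<phi>\<in>M. U ** Eq \<phi> ** adj U = Eq (f \<phi>) \<or> U ** Eq \<phi> ** adj U = - Eq (f \<phi>)"
    using assms(6) by blast
  obtain a b where ab: "a \<in> M" "b \<in> M" "a \<noteq> b" using assms(3) by blast
  define p where "p = U$0$0"
  define q where "q = U$0$1"
  define r where "r = U$1$0"
  define s where "s = U$1$1"
  have U: "U = mat2 p q r s" unfolding p_def q_def r_def s_def by (rule mat2_eta)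
  have z: "(U ** Eq x ** adj U) $ 0 $ 0 = 0" if "x \<in> M" for x
    using hf that by (force simp: Eq00 vector_uminus_component)
  have re: "Re (cnj p * q * (complex_of_real (cos x) + \<i> * complex_of_real (sin x))) = 0" if "x \<in> M" for x
    using z[OF that] unfolding U entry00 by (rule re0)
  have "cnj p * q = 0" using key[OF _ _ ab(3) re[OF ab(1)] re[OF ab(2)]] assms(1) ab(1,2) by (meson subsetD)
  hence pq: "p = 0 \<or> q = 0" by simp
  have "adj U ** U = mat 1" using assms(5) unfolding unitary_def by simp
  hence un: "cnj p * p + cnj r * r = 1" "cnj p * q + cnj r * s = 0" "cnj q * q + cnj s * s = 1"
    unfolding U mat2_adj mat2_mult mat2_one mat2_eq by auto
  show ?thesis
  proof (cases "p = 0")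
    case True
    then have rr: "cnj r * r = 1" using un by simp
    hence r0: "r \<noteq> 0" by auto
    hence s0: "s = 0" using un True by simp
    have "cmod r ^ 2 = 1" using rr by (metis complex_norm_square mult.commute of_real_eq_1_iff of_real_power)
    hence nr: "cmod r = 1" using norm_ge_zero by (smt (verit) power2_eq_1_iff)
    have "cnj q * q = 1" using un s0 by simp
    hence "cmod q ^ 2 = 1" by (metis complex_norm_square mult.commute of_real_eq_1_iff of_real_power)
    hence "cmod q = 1" using norm_ge_zero by (smt (verit) power2_eq_1_iff)
    hence "cmod (q / r) = 1" using nr by (simp add: norm_divide)
    then obtain t where t: "0 \<le> t" "t < 2*pi" "exp (\<i> * complex_of_real t) = q / r"
      using angle_exists by blast
    have "U = cscale r (pauliX ** phase_gate t)"
      unfolding U pauliX_def phase_gate_def mat2_mult mat2_scale mat2_eq t(3)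
      using True s0 r0 by simp
    thus ?thesis using nr t(1,2) by (intro exI[of _ r] exI[of _ t] exI[of _ "1::nat"]) simp
  next
    case False
    hence q0: "q = 0" using pq by simp
    have ss: "cnj s * s = 1" using un q0 by simp
    hence s0: "s \<noteq> 0" by auto
    hence r0: "r = 0" using un q0 by simp
    have pp: "cnj p * p = 1" using un r0 by simp
    have "cmod p ^ 2 = 1" using pp by (metis complex_norm_square mult.commute of_real_eq_1_iff of_real_power)
    hence np: "cmod p = 1" using norm_ge_zero by (smt (verit) power2_eq_1_iff)
    have "cmod s ^ 2 = 1" using ss by (metis complex_norm_square mult.commute of_real_eq_1_iff of_real_power)
    hence "cmod s = 1" using norm_ge_zero by (smt (verit) power2_eq_1_iff)
    hence "cmod (s / p) = 1" using np by (simp add: norm_divide)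
    then obtain t where t: "0 \<le> t" "t < 2*pi" "exp (\<i> * complex_of_real t) = s / p"
      using angle_exists by blast
    have "U = cscale p (mat 1 ** phase_gate t)"
      unfolding U mat2_one phase_gate_def mat2_mult mat2_scale mat2_eq t(3)
      using False q0 r0 by simp
    thus ?thesis using np t(1,2) by (intro exI[of _ p] exI[of _ t] exI[of _ "0::nat"]) simp
  qed
qed

end
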